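(* Let $d\ge1$, let $U$ be a convolution kernel on $\mathbb{R}^d$ and $\mathcal{L}$ a linear (pseudo-)differential operator containing only even-order derivatives such that $\varphi:=U\ast\rho$ satisfies $\mathcal{L}\varphi=\rho$ on $\mathbb{R}^d$. Let $\rho$ be a smooth compactly supported function on $\mathbb{R}^d$ whose moments vanish up to order $m\in\mathbb{N}$, i.e. $\int_{\mathbb{R}^d}\rho({\mathbf x}){\mathbf x}^{\bm\alpha}\,{\rm d}{\mathbf x}=0$ for all $|\bm\alpha|=0,1,\dots,m$. Let $\Omega$ be a bounded domain with $\Omega_0:=\operatorname{supp}\{\rho\}\subset\Omega$, and let $\widetilde\varphi$ solve $$\mathcal{L}\widetilde\varphi({\mathbf x})=\rho({\mathbf x}),\ {\mathbf x}\in\Omega,\qquad \widetilde\varphi|_{\partial\Omega}=0.$$ Assume that the maximum norm estimate holds for this equation, i.e. every $w$ with $\mathcal{L}w=0$ in $\Omega$ satisfies $\|w\|_{\infty(\Omega)}\le\|w\|_{\infty(\partial\Omega)}$. Then $$\|\varphi-\widetilde\varphi\|_{\infty(\Omega)}\lesssim\sum_{|\bm\beta|=m+1}\ \max_{{\mathbf x}\in\partial\Omega,\ {\mathbf y}\in\Omega_0,\ 0\le s\le1}\big|\partial^{\bm\beta}U({\mathbf x}-s{\mathbf y})\big|.$$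
   Context: $\|f\|_{\infty(A)}=\sup_{{\mathbf x}\in A}|f({\mathbf x})|$. $A\lesssim B$ means $A\le cB$ for a constant $c>0$. For a multi-index $\bm\beta\in\mathbb{N}^d$: $|\bm\beta|=\sum_i\beta_i$, ${\mathbf x}^{\bm\beta}=\prod_ix_i^{\beta_i}$, $\partial^{\bm\beta}=\partial_{x_1}^{\beta_1}\cdots\partial_{x_d}^{\beta_d}$. *)

theory Defs
  imports "HOL-Analysis.Analysis" "HOL-Library.Multiset"
begin

text \<open>Points of R^d are vectors of type real^'n (d = CARD('n) \<ge> 1).
  Multi-indices beta in N^d are encoded as multisets over the coordinate
  index type 'n: count beta i = beta_i, |beta| = size beta.\<close>

definition partial_deriv :: "'n::finite \<Rightarrow> (real^'n \<Rightarrow> real) \<Rightarrow> real^'n \<Rightarrow> real" where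
  "partial_deriv i f x = deriv (\<lambda>t. f (x + t *\<^sub>R axis i 1)) 0"

fun partial_list :: "'n::finite list \<Rightarrow> (real^'n \<Rightarrow> real) \<Rightarrow> real^'n \<Rightarrow> real" where
  "partial_list [] f = f"
| "partial_list (i # is) f = partial_deriv i (partial_list is f)"

definition multi_partial :: "'n::finite multiset \<Rightarrow> (real^'n \<Rightarrow> real) \<Rightarrow> real^'n \<Rightarrow> real" where
  "multi_partial \<beta> f = partial_list (SOME xs. mset xs = \<beta>) f"

definition monomial :: "'n::finite multiset \<Rightarrow> real^'n \<Rightarrow> real" where
  "monomial \<beta> x = (\<Prod>i\<in>#\<beta>. x $ i)"

definition C_k_on :: "nat \<Rightarrow> (real^'n::finite) set \<Rightarrow> (real^'n \<Rightarrow> real) \<Rightarrow> bool" where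
  "C_k_on k S f \<longleftrightarrow>
     (\<forall>xs. length xs \<le> k \<longrightarrow> continuous_on S (partial_list xs f)) \<and>
     (\<forall>xs. length xs < k \<longrightarrow> (\<forall>x\<in>S. partial_list xs f differentiable (at x)))"

definition smooth_on :: "(real^'n::finite) set \<Rightarrow> (real^'n \<Rightarrow> real) \<Rightarrow> bool" where
  "smooth_on S f \<longleftrightarrow> (\<forall>k. C_k_on k S f)"

definition supp :: "(real^'n::finite \<Rightarrow> real) \<Rightarrow> (real^'n) set" where
  "supp f = closure {x. f x \<noteq> 0}"

definition convolution :: "(real^'n::finite \<Rightarrow> real) \<Rightarrow> (real^'n \<Rightarrow> real) \<Rightarrow> real^'n \<Rightarrow> real" where
  "convolution U \<rho> x = integral UNIV (\<lambda>y. U (x - y) * \<rho> y)"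

definition linear_op :: "((real^'n::finite \<Rightarrow> real) \<Rightarrow> (real^'n \<Rightarrow> real)) \<Rightarrow> bool" where
  "linear_op L \<longleftrightarrow> (\<forall>a b f g. L (\<lambda>x. a * f x + b * g x) = (\<lambda>x. a * L f x + b * L g x))"

text \<open>"Contains only even-order derivatives": L commutes with the reflection x -> -x.\<close>
definition even_order_op :: "((real^'n::finite \<Rightarrow> real) \<Rightarrow> (real^'n \<Rightarrow> real)) \<Rightarrow> bool" where
  "even_order_op L \<longleftrightarrow> (\<forall>f. L (\<lambda>x. f (- x)) = (\<lambda>x. L f (- x)))"

end

theory Submission
  imports Defs
begin

lemma dir_deriv:
  fixes F :: "real^'n::finite \<Rightarrow> real"
  assumes "F differentiable (at (q + t0 *\<^sub>R v))"
  shows "((\<lambda>t. F (q + t *\<^sub>R v)) has_real_derivative frechet_derivative F (at (q + t0 *\<^sub>R v)) v) (at t0)"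
proof -
  let ?F' = "frechet_derivative F (at (q + t0 *\<^sub>R v))"
  have d: "(F has_derivative ?F') (at (q + t0 *\<^sub>R v))"
    using assms frechet_derivative_works by blast
  have lin: "linear ?F'" using d has_derivative_linear by blast
  have i: "((\<lambda>t. q + t *\<^sub>R v) has_derivative (\<lambda>t. t *\<^sub>R v)) (at t0)"
    by (auto intro!: derivative_eq_intros)
  have "((\<lambda>t. F (q + t *\<^sub>R v)) has_derivative (\<lambda>t. ?F' (t *\<^sub>R v))) (at t0)"
    using has_derivative_compose[OF i d] by (simp add: o_def)
  moreover have "(\<lambda>t. ?F' (t *\<^sub>R v)) = (*) (?F' v)"
    using linear_scale[OF lin] by (auto simp: mult.commute)
  ultimately show ?thesis unfolding has_field_derivative_def by simp
qed

lemma pd_frechet: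
  fixes F :: "real^'n::finite \<Rightarrow> real"
  assumes "F differentiable (at p)"
  shows "partial_deriv i F p = frechet_derivative F (at p) (axis i 1)"
proof -
  have "((\<lambda>t. F (p + t *\<^sub>R axis i 1)) has_real_derivative frechet_derivative F (at p) (axis i 1)) (at 0)"
    using dir_deriv[of F p 0 "axis i 1"] assms by simp
  then show ?thesis unfolding partial_deriv_def by (rule DERIV_imp_deriv)
qed

lemma lin_expand:
  fixes f' :: "real^'n::finite \<Rightarrow> real"
  assumes "linear f'"
  shows "f' v = (\<Sum>i\<in>UNIV. v $ i * f' (axis i 1))"
proof -
  have "v = (\<Sum>i\<in>UNIV. v $ i *\<^sub>R axis i 1)"
    using basis_expansion[of v] by (simp add: scalar_mult_eq_scaleR)
  then have "f' v = f' (\<Sum>i\<in>UNIV. v $ i *\<^sub>R axis i 1)" by simp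
  also have "\<dots> = (\<Sum>i\<in>UNIV. v $ i * f' (axis i 1))"
    using assms by (simp add: linear_sum linear_scale)
  finally show ?thesis .
qed

lemma dir_deriv_pd:
  fixes F :: "real^'n::finite \<Rightarrow> real"
  assumes "F differentiable (at (q + t0 *\<^sub>R v))"
  shows "((\<lambda>t. F (q + t *\<^sub>R v)) has_real_derivative (\<Sum>i\<in>UNIV. v $ i * partial_deriv i F (q + t0 *\<^sub>R v))) (at t0)"
proof -
  have lin: "linear (frechet_derivative F (at (q + t0 *\<^sub>R v)))"
    using assms frechet_derivative_works has_derivative_linear by blast
  show ?thesis using dir_deriv[OF assms] lin_expand[OF lin, of v] pd_frechet[OF assms] by simp
qed

lemma pd_local:
  fixes f g :: "real^'n::finite \<Rightarrow> real"
  assumes "open S" "\<forall>z\<in>S. f z = g z" "z \<in> S"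
  shows "partial_deriv i f z = partial_deriv i g z"
proof -
  have ev: "eventually (\<lambda>t. f (z + t *\<^sub>R axis i 1) = g (z + t *\<^sub>R axis i 1)) (nhds 0)"
  proof -
    obtain e where e: "e>0" "ball z e \<subseteq> S" using assms open_contains_ball by blast
    have "eventually (\<lambda>t::real. t \<in> ball 0 e) (nhds 0)" using e by (intro eventually_nhds_in_open) auto
    then show ?thesis
    proof eventually_elim
      case (elim t)
      then have "z + t *\<^sub>R axis i 1 \<in> ball z e" by (simp add: dist_norm)
      then show ?case using e assms by blast
    qed
  qed
  have "\<And>D. DERIV (\<lambda>t. f (z + t *\<^sub>R axis i 1)) 0 :> D \<longleftrightarrow> DERIV (\<lambda>t. g (z + t *\<^sub>R axis i 1)) 0 :> D"
    using DERIV_cong_ev[OF refl ev refl] .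
  then show ?thesis unfolding partial_deriv_def deriv_def by simp
qed

lemma dir_pd:
  fixes F :: "real^'n::finite \<Rightarrow> real"
  assumes "F differentiable (at (q + t0 *\<^sub>R axis i 1))"
  shows "((\<lambda>t. F (q + t *\<^sub>R axis i 1)) has_real_derivative partial_deriv i F (q + t0 *\<^sub>R axis i 1)) (at t0)"
  using dir_deriv[OF assms] pd_frechet[OF assms, of i] by simp

lemma mvt_double:
  fixes g :: "real^'n::finite \<Rightarrow> real"
  assumes h: "0 < h"
    and dg: "\<forall>t\<in>{0..h}. \<forall>s\<in>{0..h}. g differentiable (at (z + t *\<^sub>R axis i 1 + s *\<^sub>R axis j 1))"
    and dgi: "\<forall>t\<in>{0..h}. \<forall>s\<in>{0..h}. partial_deriv i g differentiable (at (z + t *\<^sub>R axis i 1 + s *\<^sub>R axis j 1))"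
  shows "\<exists>t\<in>{0..h}. \<exists>s\<in>{0..h}. g (z + h *\<^sub>R axis i 1 + h *\<^sub>R axis j 1) - g (z + h *\<^sub>R axis i 1)
      - g (z + h *\<^sub>R axis j 1) + g z = h^2 * partial_deriv j (partial_deriv i g) (z + t *\<^sub>R axis i 1 + s *\<^sub>R axis j 1)"
proof -
  let ?ei = "axis i (1::real)" and ?ej = "axis j (1::real)"
  define \<phi> where "\<phi> t = g ((z + h *\<^sub>R ?ej) + t *\<^sub>R ?ei) - g (z + t *\<^sub>R ?ei)" for t
  define \<phi>' where "\<phi>' t = partial_deriv i g ((z + h *\<^sub>R ?ej) + t *\<^sub>R ?ei) - partial_deriv i g (z + t *\<^sub>R ?ei)" for t
  have "DERIV \<phi> t :> \<phi>' t" if "0 \<le> t" "t \<le> h" for t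
  proof -
    have d1: "g differentiable (at ((z + h *\<^sub>R ?ej) + t *\<^sub>R ?ei))"
    proof -
      have "(z + h *\<^sub>R ?ej) + t *\<^sub>R ?ei = z + t *\<^sub>R ?ei + h *\<^sub>R ?ej" by (simp add: add_ac)
      moreover have "g differentiable (at (z + t *\<^sub>R ?ei + h *\<^sub>R ?ej))"
        using dg that h by simp
      ultimately show ?thesis by (simp only:)
    qed
    have d2: "g differentiable (at (z + t *\<^sub>R ?ei))"
      using bspec[OF bspec[OF dg, of t], of 0] that h by simp
    show ?thesis unfolding \<phi>_def \<phi>'_def
      by (intro DERIV_diff dir_pd d1 d2)
  qed
  then obtain t1 where t1: "0 < t1" "t1 < h" "\<phi> h - \<phi> 0 = (h - 0) * \<phi>' t1"
    using MVT2[OF h] by blast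
  define \<psi> where "\<psi> s = partial_deriv i g ((z + t1 *\<^sub>R ?ei) + s *\<^sub>R ?ej)" for s
  define \<psi>' where "\<psi>' s = partial_deriv j (partial_deriv i g) ((z + t1 *\<^sub>R ?ei) + s *\<^sub>R ?ej)" for s
  have der2: "DERIV \<psi> s :> \<psi>' s"
    if "0 \<le> s" "s \<le> h" for s
    unfolding \<psi>_def \<psi>'_def
  proof (rule dir_pd)
    have "t1 \<in> {0..h}" "s \<in> {0..h}" using that t1 by auto
    then show "partial_deriv i g differentiable (at (z + t1 *\<^sub>R ?ei + s *\<^sub>R ?ej))"
      using dgi by blast
  qed
  obtain s1 where s1: "0 < s1" "s1 < h"
    "\<psi> h - \<psi> 0 = (h - 0) * \<psi>' s1"
    using MVT2[OF h, of \<psi> \<psi>', OF der2] by blast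
  have "\<phi>' t1 = \<psi> h - \<psi> 0"
    unfolding \<phi>'_def \<psi>_def by (simp add: add_ac)
  moreover have "\<phi> h - \<phi> 0 = g (z + h *\<^sub>R ?ei + h *\<^sub>R ?ej) - g (z + h *\<^sub>R ?ei) - g (z + h *\<^sub>R ?ej) + g z"
    unfolding \<phi>_def by (simp add: add_ac)
  ultimately have "g (z + h *\<^sub>R ?ei + h *\<^sub>R ?ej) - g (z + h *\<^sub>R ?ei) - g (z + h *\<^sub>R ?ej) + g z
     = h^2 * partial_deriv j (partial_deriv i g) (z + t1 *\<^sub>R ?ei + s1 *\<^sub>R ?ej)"
    using t1(3) s1(3) by (simp add: power2_eq_square \<psi>'_def)
  moreover have "t1 \<in> {0..h}" "s1 \<in> {0..h}" using t1 s1 by auto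
  ultimately show ?thesis by blast
qed

lemma near_pt:
  fixes z :: "real^'n::finite"
  assumes "t \<in> {0..h}" "s \<in> {0..h}" "2 * h < d"
  shows "z + t *\<^sub>R axis i 1 + s *\<^sub>R axis j 1 \<in> ball z d"
proof -
  have "norm (t *\<^sub>R axis i (1::real) + s *\<^sub>R axis j 1) \<le> norm (t *\<^sub>R axis i (1::real)) + norm (s *\<^sub>R axis j (1::real))"
    by (rule norm_triangle_ineq)
  also have "\<dots> = \<bar>t\<bar> + \<bar>s\<bar>" by simp
  also have "\<dots> < d" using assms by auto
  finally have "norm (t *\<^sub>R axis i (1::real) + s *\<^sub>R axis j 1) < d" .
  moreover have "dist (z + t *\<^sub>R axis i 1 + s *\<^sub>R axis j 1) z = norm (t *\<^sub>R axis i (1::real) + s *\<^sub>R axis j 1)"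
    by (simp add: dist_norm add.assoc)
  ultimately show ?thesis by (simp add: dist_commute)
qed

lemma tri_contra:
  assumes "\<bar>(P::real) - B\<bar> < \<bar>A - B\<bar> / 2" "\<bar>P - A\<bar> < \<bar>A - B\<bar> / 2" shows False
proof -
  have "\<bar>A - B\<bar> \<le> \<bar>A - P\<bar> + \<bar>P - B\<bar>" using abs_triangle_ineq[of "A - P" "P - B"] by simp
  then show False using assms by (simp add: abs_minus_commute)
qed

lemma schwarz:
  fixes g :: "real^'n::finite \<Rightarrow> real"
  assumes S: "open S" "z \<in> S"
    and cij: "continuous_on S (partial_deriv i (partial_deriv j g))"
    and cji: "continuous_on S (partial_deriv j (partial_deriv i g))"
    and dg: "\<forall>w\<in>S. g differentiable (at w)"
    and di: "\<forall>w\<in>S. partial_deriv i g differentiable (at w)"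
    and dj: "\<forall>w\<in>S. partial_deriv j g differentiable (at w)"
  shows "partial_deriv i (partial_deriv j g) z = partial_deriv j (partial_deriv i g) z"
proof (rule ccontr)
  let ?A = "partial_deriv i (partial_deriv j g) z" and ?B = "partial_deriv j (partial_deriv i g) z"
  assume ne: "?A \<noteq> ?B"
  define e where "e = \<bar>?A - ?B\<bar> / 2"
  have e: "e > 0" using ne by (simp add: e_def)
  obtain d1 where d1: "d1 > 0" "\<forall>x'\<in>S. dist x' z < d1 \<longrightarrow> dist (partial_deriv i (partial_deriv j g) x') ?A < e"
    using cij S e unfolding continuous_on_iff by blast
  obtain d2 where d2: "d2 > 0" "\<forall>x'\<in>S. dist x' z < d2 \<longrightarrow> dist (partial_deriv j (partial_deriv i g) x') ?B < e"
    using cji S e unfolding continuous_on_iff by blast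
  obtain d0 where d0: "d0 > 0" "ball z d0 \<subseteq> S" using S open_contains_ball by blast
  define d where "d = min d0 (min d1 d2)"
  have d: "d > 0" "ball z d \<subseteq> S" "d \<le> d1" "d \<le> d2" using d0 d1 d2 by (auto simp: d_def)
  define h where "h = d / 3"
  have h: "h > 0" "2 * h < d" using d by (auto simp: h_def)
  have inS: "z + t *\<^sub>R axis k 1 + s *\<^sub>R axis l 1 \<in> ball z d" if "t \<in> {0..h}" "s \<in> {0..h}" for t s k l
    using near_pt[OF that h(2)] .
  have "\<exists>t\<in>{0..h}. \<exists>s\<in>{0..h}. g (z + h *\<^sub>R axis i 1 + h *\<^sub>R axis j 1) - g (z + h *\<^sub>R axis i 1)
      - g (z + h *\<^sub>R axis j 1) + g z = h^2 * partial_deriv j (partial_deriv i g) (z + t *\<^sub>R axis i 1 + s *\<^sub>R axis j 1)"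
    by (rule mvt_double[OF h(1)]) (use inS d dg di in blast)+
  then obtain t1 s1 where ts1: "t1 \<in> {0..h}" "s1 \<in> {0..h}" "g (z + h *\<^sub>R axis i 1 + h *\<^sub>R axis j 1) - g (z + h *\<^sub>R axis i 1)
      - g (z + h *\<^sub>R axis j 1) + g z = h^2 * partial_deriv j (partial_deriv i g) (z + t1 *\<^sub>R axis i 1 + s1 *\<^sub>R axis j 1)"
    by blast
  have "\<exists>t\<in>{0..h}. \<exists>s\<in>{0..h}. g (z + h *\<^sub>R axis j 1 + h *\<^sub>R axis i 1) - g (z + h *\<^sub>R axis j 1)
      - g (z + h *\<^sub>R axis i 1) + g z = h^2 * partial_deriv i (partial_deriv j g) (z + t *\<^sub>R axis j 1 + s *\<^sub>R axis i 1)"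
    by (rule mvt_double[OF h(1)]) (use inS d dg dj in blast)+
  then obtain t2 s2 where ts2: "t2 \<in> {0..h}" "s2 \<in> {0..h}" "g (z + h *\<^sub>R axis j 1 + h *\<^sub>R axis i 1) - g (z + h *\<^sub>R axis j 1)
      - g (z + h *\<^sub>R axis i 1) + g z = h^2 * partial_deriv i (partial_deriv j g) (z + t2 *\<^sub>R axis j 1 + s2 *\<^sub>R axis i 1)"
    by blast
  have eqpt: "z + h *\<^sub>R axis j 1 + h *\<^sub>R axis i 1 = z + h *\<^sub>R axis i 1 + h *\<^sub>R axis j 1" by (simp add: add_ac)
  have "h^2 * partial_deriv j (partial_deriv i g) (z + t1 *\<^sub>R axis i 1 + s1 *\<^sub>R axis j 1)
     = h^2 * partial_deriv i (partial_deriv j g) (z + t2 *\<^sub>R axis j 1 + s2 *\<^sub>R axis i 1)"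
    using ts1(3) ts2(3)[unfolded eqpt] by linarith
  then have eq: "partial_deriv j (partial_deriv i g) (z + t1 *\<^sub>R axis i 1 + s1 *\<^sub>R axis j 1)
     = partial_deriv i (partial_deriv j g) (z + t2 *\<^sub>R axis j 1 + s2 *\<^sub>R axis i 1)"
    using h by simp
  have p1: "z + t1 *\<^sub>R axis i 1 + s1 *\<^sub>R axis j 1 \<in> ball z d" using inS ts1 by blast
  have p2: "z + t2 *\<^sub>R axis j 1 + s2 *\<^sub>R axis i 1 \<in> ball z d" using inS ts2 by blast
  have "dist (partial_deriv j (partial_deriv i g) (z + t1 *\<^sub>R axis i 1 + s1 *\<^sub>R axis j 1)) ?B < e"
  proof -
    have "dist (z + t1 *\<^sub>R axis i 1 + s1 *\<^sub>R axis j 1) z < d2" using p1 d by (simp add: dist_commute)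
    moreover have "z + t1 *\<^sub>R axis i 1 + s1 *\<^sub>R axis j 1 \<in> S" using p1 d by blast
    ultimately show ?thesis using d2(2) by blast
  qed
  moreover have "dist (partial_deriv i (partial_deriv j g) (z + t2 *\<^sub>R axis j 1 + s2 *\<^sub>R axis i 1)) ?A < e"
  proof -
    have "dist (z + t2 *\<^sub>R axis j 1 + s2 *\<^sub>R axis i 1) z < d1" using p2 d by (simp add: dist_commute)
    moreover have "z + t2 *\<^sub>R axis j 1 + s2 *\<^sub>R axis i 1 \<in> S" using p2 d by blast
    ultimately show ?thesis using d1(2) by blast
  qed
  ultimately show False using eq tri_contra unfolding e_def dist_real_def by metis
qed

lemma move_front:
  assumes C: "C_k_on k S f" and S: "open S"
  shows "length (ys1 @ a # ys2) \<le> k \<Longrightarrow>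
    \<forall>z\<in>S. partial_deriv a (partial_list (ys1 @ ys2) f) z = partial_list (ys1 @ a # ys2) f z"
proof (induction ys1)
  case Nil
  then show ?case by simp
next
  case (Cons b ys1)
  let ?g = "partial_list (ys1 @ ys2) f"
  have cont: "\<And>xs. length xs \<le> k \<Longrightarrow> continuous_on S (partial_list xs f)"
    and diff: "\<And>xs x. length xs < k \<Longrightarrow> x \<in> S \<Longrightarrow> partial_list xs f differentiable (at x)"
    using C unfolding C_k_on_def by auto
  have IH: "\<forall>z\<in>S. partial_deriv a ?g z = partial_list (ys1 @ a # ys2) f z"
    using Cons by simp
  show ?case
  proof
    fix z assume z: "z \<in> S"
    have c1: "continuous_on S (partial_deriv a (partial_deriv b ?g))"
      using cont[of "a # b # ys1 @ ys2"] Cons.prems by simp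
    have c2: "continuous_on S (partial_deriv b (partial_deriv a ?g))"
      using cont[of "b # a # ys1 @ ys2"] Cons.prems by simp
    have d0: "\<forall>w\<in>S. ?g differentiable (at w)"
      using diff[of "ys1 @ ys2"] Cons.prems by simp
    have d1: "\<forall>w\<in>S. partial_deriv a ?g differentiable (at w)"
      using diff[of "a # ys1 @ ys2"] Cons.prems by simp
    have d2: "\<forall>w\<in>S. partial_deriv b ?g differentiable (at w)"
      using diff[of "b # ys1 @ ys2"] Cons.prems by simp
    have "partial_deriv a (partial_deriv b ?g) z = partial_deriv b (partial_deriv a ?g) z"
      by (rule schwarz[OF S z c1 c2 d0 d1 d2])
    also have "\<dots> = partial_deriv b (partial_list (ys1 @ a # ys2) f) z"
      by (rule pd_local[OF S IH z])
    finally show "partial_deriv a (partial_list ((b # ys1) @ ys2) f) z = partial_list ((b # ys1) @ a # ys2) f z"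
      by simp
  qed
qed

lemma perm_pl:
  assumes C: "C_k_on k S f" and S: "open S"
  shows "length xs \<le> k \<Longrightarrow> mset xs = mset ys \<Longrightarrow> \<forall>z\<in>S. partial_list xs f z = partial_list ys f z"
proof (induction xs arbitrary: ys)
  case Nil
  then show ?case by simp
next
  case (Cons a xs)
  have "a \<in> set ys" using Cons.prems(2) by (metis list.set_intros(1) set_mset_mset)
  then obtain ys1 ys2 where ys: "ys = ys1 @ a # ys2" using split_list by metis
  have "mset xs = mset (ys1 @ ys2)" using Cons.prems(2) ys by simp
  then have IH: "\<forall>z\<in>S. partial_list xs f z = partial_list (ys1 @ ys2) f z"
    using Cons.IH Cons.prems(1) by simp
  have len: "length (ys1 @ a # ys2) \<le> k"
    using Cons.prems ys by (metis size_mset)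
  show ?case
  proof
    fix z assume z: "z \<in> S"
    have "partial_list (a # xs) f z = partial_deriv a (partial_list (ys1 @ ys2) f) z"
      using pd_local[OF S IH z] by simp
    also have "\<dots> = partial_list ys f z"
      using move_front[OF C S len] z ys by simp
    finally show "partial_list (a # xs) f z = partial_list ys f z" .
  qed
qed

lemma multi_partial_eq:
  assumes C: "C_k_on k S f" and S: "open S" and "length xs \<le> k" "z \<in> S"
  shows "multi_partial (mset xs) f z = partial_list xs f z"
proof -
  let ?ys = "SOME ys. mset ys = mset xs"
  have "mset ?ys = mset xs" by (rule someI[of _ xs]) simp
  then show ?thesis unfolding multi_partial_def
    using perm_pl[OF C S, of xs ?ys] assms by simp
qed

lemma finite_len: "finite {xs :: 'n::finite list. length xs = k}"
  using finite_lists_length_eq[of "UNIV :: 'n set" k] by simp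

lemma sum_lists_Suc:
  fixes f :: "'n::finite list \<Rightarrow> real"
  shows "(\<Sum>xs\<in>{xs. length xs = Suc k}. f xs) = (\<Sum>i\<in>UNIV. \<Sum>xs\<in>{xs. length xs = k}. f (i # xs))"
proof -
  have eq: "{xs :: 'n list. length xs = Suc k} = (\<lambda>(i, xs). i # xs) ` (UNIV \<times> {xs. length xs = k})"
    by (auto simp: image_def length_Suc_conv)
  have inj: "inj_on (\<lambda>(i, xs). i # xs) (UNIV \<times> {xs :: 'n list. length xs = k})"
    by (auto simp: inj_on_def)
  have "(\<Sum>xs\<in>{xs. length xs = Suc k}. f xs) = (\<Sum>p\<in>UNIV \<times> {xs. length xs = k}. f (fst p # snd p))"
    unfolding eq by (subst sum.reindex[OF inj]) (simp add: case_prod_beta)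
  also have "\<dots> = (\<Sum>i\<in>UNIV. \<Sum>xs\<in>{xs. length xs = k}. f (i # xs))"
    unfolding sum.cartesian_product by (intro sum.cong refl) (auto simp: case_prod_beta)
  finally show ?thesis .
qed

definition Dt :: "(real^'n::finite \<Rightarrow> real) \<Rightarrow> real^'n \<Rightarrow> real^'n \<Rightarrow> nat \<Rightarrow> real \<Rightarrow> real" where
  "Dt U x y k s = (\<Sum>xs\<in>{xs. length xs = k}. prod_list (map (\<lambda>i. - y $ i) xs) * partial_list xs U (x - s *\<^sub>R y))"

lemma Dt_0: "Dt U x y 0 = (\<lambda>s. U (x - s *\<^sub>R y))"
proof -
  have "{xs :: 'n list. length xs = 0} = {[]}" by auto
  then show ?thesis by (auto simp: Dt_def fun_eq_iff)
qed

lemma Dt_deriv: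
  fixes U :: "real^'n::finite \<Rightarrow> real"
  assumes C: "C_k_on (Suc m) S U" and k: "k < Suc m" and p: "x - s *\<^sub>R y \<in> S"
  shows "DERIV (Dt U x y k) s :> Dt U x y (Suc k) s"
proof -
  have diff: "partial_list xs U differentiable (at (x - s *\<^sub>R y))" if "length xs = k" for xs
    using C p k that unfolding C_k_on_def by auto
  have "DERIV (\<lambda>s. partial_list xs U (x + s *\<^sub>R (- y))) s :>
      (\<Sum>i\<in>UNIV. (- y) $ i * partial_deriv i (partial_list xs U) (x + s *\<^sub>R (- y)))"
    if "length xs = k" for xs
    by (rule dir_deriv_pd) (use diff[OF that] in simp)
  then have d: "DERIV (\<lambda>s. prod_list (map (\<lambda>i. - y $ i) xs) * partial_list xs U (x - s *\<^sub>R y)) s :>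
      prod_list (map (\<lambda>i. - y $ i) xs) * (\<Sum>i\<in>UNIV. (- y $ i) * partial_list (i # xs) U (x - s *\<^sub>R y))"
    if "length xs = k" for xs
    using that by (intro DERIV_cmult) simp
  have "DERIV (Dt U x y k) s :> (\<Sum>xs\<in>{xs. length xs = k}. prod_list (map (\<lambda>i. - y $ i) xs) *
      (\<Sum>i\<in>UNIV. (- y $ i) * partial_list (i # xs) U (x - s *\<^sub>R y)))"
    unfolding Dt_def[abs_def] by (rule DERIV_sum) (use d in simp)
  moreover have "(\<Sum>xs\<in>{xs. length xs = k}. prod_list (map (\<lambda>i. - y $ i) xs) *
      (\<Sum>i\<in>UNIV. (- y $ i) * partial_list (i # xs) U (x - s *\<^sub>R y))) = Dt U x y (Suc k) s"
    unfolding Dt_def sum_lists_Suc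
    by (subst sum.swap) (simp add: sum_distrib_left mult_ac)
  ultimately show ?thesis by simp
qed

lemma prod_neg: "prod_list (map (\<lambda>i. - y $ i) xs) = (-1) ^ length xs * monomial (mset xs) (y :: real^'n::finite)"
  by (induction xs) (simp_all add: monomial_def)

lemma monomial_list: "monomial (mset xs) (y :: real^'n::finite) = prod_list (map (\<lambda>i. y $ i) xs)"
  by (induction xs) (simp_all add: monomial_def)

lemma taylor_pt:
  fixes U :: "real^'n::finite \<Rightarrow> real"
  assumes C: "C_k_on (Suc m) S U" and seg: "\<forall>s\<in>{0..1}. x - s *\<^sub>R y \<in> S"
  shows "\<exists>t. 0 < t \<and> t < 1 \<and> U (x - y) =
    (\<Sum>k<Suc m. \<Sum>xs\<in>{xs. length xs = k}. ((-1) ^ k * partial_list xs U x / fact k) * monomial (mset xs) y)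
    + Dt U x y (Suc m) t / fact (Suc m)"
proof -
  have "\<exists>t. 0 < t \<and> t < 1 \<and> (\<lambda>s. U (x - s *\<^sub>R y)) 1 =
      (\<Sum>k<Suc m. Dt U x y k 0 / fact k * 1 ^ k) + Dt U x y (Suc m) t / fact (Suc m) * 1 ^ Suc m"
  proof (rule Maclaurin)
    show "Dt U x y 0 = (\<lambda>s. U (x - s *\<^sub>R y))" by (rule Dt_0)
    show "\<forall>k t. k < Suc m \<and> 0 \<le> t \<and> t \<le> 1 \<longrightarrow> DERIV (Dt U x y k) t :> Dt U x y (Suc k) t"
      using Dt_deriv[OF C] seg by auto
  qed auto
  moreover have "Dt U x y k 0 / fact k =
      (\<Sum>xs\<in>{xs. length xs = k}. ((-1) ^ k * partial_list xs U x / fact k) * monomial (mset xs) y)" for k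
    unfolding Dt_def sum_divide_distrib by (intro sum.cong refl) (simp add: prod_neg)
  ultimately show ?thesis by simp
qed



lemma cs_int:
  fixes f :: "real^'n::finite \<Rightarrow> real"
  assumes "continuous_on UNIV f" "compact K" "\<And>y. y \<notin> K \<Longrightarrow> f y = 0"
  shows "f integrable_on UNIV"
proof -
  obtain a where a: "K \<subseteq> cbox (-a) a"
    by (rule bounded_subset_cbox_symmetric[OF compact_imp_bounded[OF assms(2)]])
  have "f integrable_on cbox (-a) a"
    by (rule integrable_continuous) (rule continuous_on_subset[OF assms(1)], simp)
  then show ?thesis
    by (rule integrable_on_superset) (use a assms(3) in auto)
qed

lemma cont_monomial: "continuous_on UNIV (\<lambda>y::real^'n::finite. monomial (mset xs) y)"
  unfolding monomial_list by (induction xs) (auto intro!: continuous_intros)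

definition Gf :: "(real^'n::finite \<Rightarrow> real) \<Rightarrow> nat \<Rightarrow> real^'n \<Rightarrow> real" where
  "Gf \<rho> m y = \<bar>\<rho> y\<bar> * (\<Sum>xs\<in>{xs. length xs = Suc m}. \<bar>monomial (mset xs) y\<bar>) / fact (Suc m)"

lemma supp_out: "y \<notin> supp \<rho> \<Longrightarrow> \<rho> y = 0"
  unfolding supp_def using closure_subset[of "{x. \<rho> x \<noteq> 0}"] by blast

lemma Gf_int:
  assumes rc: "continuous_on UNIV \<rho>" and cs: "compact (supp \<rho>)"
  shows "Gf \<rho> m integrable_on UNIV" "\<And>y. 0 \<le> Gf \<rho> m y" "0 \<le> integral UNIV (Gf \<rho> m)"
proof -
  have c1: "continuous_on UNIV (\<lambda>y. \<Sum>xs\<in>{xs. length xs = Suc m}. \<bar>monomial (mset xs) y\<bar>)"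
    by (rule continuous_on_sum) (rule continuous_on_rabs[OF cont_monomial])
  have c2: "continuous_on UNIV (\<lambda>y. \<bar>\<rho> y\<bar>)" by (rule continuous_on_rabs[OF rc])
  have c3: "continuous_on UNIV (\<lambda>y. \<bar>\<rho> y\<bar> * (\<Sum>xs\<in>{xs. length xs = Suc m}. \<bar>monomial (mset xs) y\<bar>) / fact (Suc m))"
    by (rule continuous_on_divide[OF continuous_on_mult[OF c2 c1] continuous_on_const]) simp
  have eqG: "Gf \<rho> m = (\<lambda>y. \<bar>\<rho> y\<bar> * (\<Sum>xs\<in>{xs. length xs = Suc m}. \<bar>monomial (mset xs) y\<bar>) / fact (Suc m))"
    by (rule ext) (simp only: Gf_def)
  show G: "Gf \<rho> m integrable_on UNIV"
  proof (rule cs_int[OF _ cs])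
    show "continuous_on UNIV (Gf \<rho> m)" unfolding eqG by (rule c3)
    show "\<And>y. y \<notin> supp \<rho> \<Longrightarrow> Gf \<rho> m y = 0" by (simp add: Gf_def supp_out[of _ \<rho>])
  qed
  show nn: "\<And>y. 0 \<le> Gf \<rho> m y" unfolding Gf_def by (intro divide_nonneg_pos mult_nonneg_nonneg sum_nonneg) auto
  show "0 \<le> integral UNIV (Gf \<rho> m)" by (rule integral_nonneg[OF G nn])
qed

lemma conv_bound:
  fixes U \<rho> :: "real^'n::finite \<Rightarrow> real"
  assumes rc: "continuous_on UNIV \<rho>" and cs: "compact (supp \<rho>)"
    and moments: "\<And>\<alpha>. size \<alpha> \<le> m \<Longrightarrow> integral UNIV (\<lambda>x. \<rho> x * monomial \<alpha> x) = 0"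
    and C: "C_k_on (Suc m) S U"
    and seg: "\<forall>y\<in>supp \<rho>. \<forall>s\<in>{0..1}. x - s *\<^sub>R y \<in> S"
    and Mb: "\<And>xs y s. length xs = Suc m \<Longrightarrow> y \<in> supp \<rho> \<Longrightarrow> s \<in> {0..1} \<Longrightarrow>
        \<bar>partial_list xs U (x - s *\<^sub>R y)\<bar> \<le> Mt"
    and Mt: "0 \<le> Mt"
  shows "\<bar>convolution U \<rho> x\<bar> \<le> Mt * integral UNIV (Gf \<rho> m)"
proof -
  note G = Gf_int[OF rc cs, of m]
  define F where "F y = U (x - y) * \<rho> y" for y
  define coef where "coef k xs = (-1) ^ k * partial_list xs U x / fact k" for k and xs :: "'n list"
  define P where "P y = (\<Sum>k<Suc m. \<Sum>xs\<in>{xs. length xs = k}. coef k xs * monomial (mset xs) y)" for y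
  have mom_int: "((\<lambda>y. \<rho> y * monomial (mset xs) y) has_integral 0) UNIV" if "length xs \<le> m" for xs
  proof -
    have int: "(\<lambda>y. \<rho> y * monomial (mset xs) y) integrable_on UNIV"
    proof (rule cs_int[OF _ cs])
      show "continuous_on UNIV (\<lambda>y. \<rho> y * monomial (mset xs) y)"
        by (rule continuous_on_mult[OF rc cont_monomial])
      show "\<And>y. y \<notin> supp \<rho> \<Longrightarrow> \<rho> y * monomial (mset xs) y = 0" by (simp add: supp_out[of _ \<rho>])
    qed
    have "integral UNIV (\<lambda>y. \<rho> y * monomial (mset xs) y) = 0"
      using moments[of "mset xs"] that by simp
    then show ?thesis using integrable_integral[OF int] by simp
  qed
  have I1: "((\<lambda>y. \<Sum>k<Suc m. \<Sum>xs\<in>{xs. length xs = k}. coef k xs * (\<rho> y * monomial (mset xs) y)) has_integral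
      (\<Sum>k<Suc m. \<Sum>xs\<in>{xs. length xs = k}. coef k xs * 0)) UNIV"
  proof (rule has_integral_sum[OF finite_lessThan])
    fix k assume k: "k \<in> {..<Suc m}"
    show "((\<lambda>y. \<Sum>xs\<in>{xs. length xs = k}. coef k xs * (\<rho> y * monomial (mset xs) y)) has_integral
      (\<Sum>xs\<in>{xs. length xs = k}. coef k xs * 0)) UNIV"
    proof (rule has_integral_sum[OF finite_len])
      fix xs :: "'n list" assume "xs \<in> {xs. length xs = k}"
      then have "length xs \<le> m" using k by simp
      then show "((\<lambda>y. coef k xs * (\<rho> y * monomial (mset xs) y)) has_integral coef k xs * 0) UNIV"
        by (rule has_integral_mult_right[OF mom_int])
    qed
  qed
  have eqf: "(\<lambda>y. \<Sum>k<Suc m. \<Sum>xs\<in>{xs. length xs = k}. coef k xs * (\<rho> y * monomial (mset xs) y)) = (\<lambda>y. \<rho> y * P y)"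
    unfolding P_def sum_distrib_left by (simp only: mult.left_commute)
  have z: "(\<Sum>k<Suc m. \<Sum>xs\<in>{xs. length xs = k}. coef k xs * 0) = (0::real)" by simp
  have PI: "((\<lambda>y. \<rho> y * P y) has_integral 0) UNIV" using I1 unfolding eqf z .
  have pw: "\<bar>F y - \<rho> y * P y\<bar> \<le> Mt * Gf \<rho> m y" for y
  proof (cases "\<rho> y = 0")
    case True
    then show ?thesis by (simp add: F_def Gf_def)
  next
    case False
    then have y: "y \<in> supp \<rho>" using supp_out[of y \<rho>] by blast
    have "\<forall>s\<in>{0..1}. x - s *\<^sub>R y \<in> S" using seg y by blast
    from taylor_pt[OF C this] obtain t where t: "0 < t" "t < 1" "U (x - y) = P y + Dt U x y (Suc m) t / fact (Suc m)"
      unfolding P_def coef_def by blast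
    have "\<bar>Dt U x y (Suc m) t\<bar> \<le> (\<Sum>xs\<in>{xs. length xs = Suc m}. \<bar>prod_list (map (\<lambda>i. - y $ i) xs) * partial_list xs U (x - t *\<^sub>R y)\<bar>)"
      unfolding Dt_def by (rule sum_abs)
    also have "\<dots> \<le> (\<Sum>xs\<in>{xs. length xs = Suc m}. \<bar>monomial (mset xs) y\<bar> * Mt)"
    proof (rule sum_mono)
      fix xs :: "'n list" assume "xs \<in> {xs. length xs = Suc m}"
      then have "\<bar>partial_list xs U (x - t *\<^sub>R y)\<bar> \<le> Mt" using Mb y t by auto
      then show "\<bar>prod_list (map (\<lambda>i. - y $ i) xs) * partial_list xs U (x - t *\<^sub>R y)\<bar> \<le> \<bar>monomial (mset xs) y\<bar> * Mt"
        by (simp add: prod_neg abs_mult mult_left_mono)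
    qed
    finally have D: "\<bar>Dt U x y (Suc m) t\<bar> \<le> Mt * (\<Sum>xs\<in>{xs. length xs = Suc m}. \<bar>monomial (mset xs) y\<bar>)"
      by (simp add: sum_distrib_left mult_ac)
    have "F y - \<rho> y * P y = \<rho> y * (Dt U x y (Suc m) t / fact (Suc m))"
      using t(3) by (simp add: F_def algebra_simps)
    then have "\<bar>F y - \<rho> y * P y\<bar> = \<bar>\<rho> y\<bar> * \<bar>Dt U x y (Suc m) t\<bar> / fact (Suc m)"
      by (simp add: abs_mult)
    also have "\<dots> \<le> \<bar>\<rho> y\<bar> * (Mt * (\<Sum>xs\<in>{xs. length xs = Suc m}. \<bar>monomial (mset xs) y\<bar>)) / fact (Suc m)"
      by (intro divide_right_mono mult_left_mono D) auto
    also have "\<dots> = Mt * Gf \<rho> m y" by (simp add: Gf_def)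
    finally show ?thesis .
  qed
  show ?thesis
  proof (cases "F integrable_on UNIV")
    case False
    then have "convolution U \<rho> x = 0"
      unfolding convolution_def F_def by (simp add: not_integrable_integral)
    then show ?thesis using G Mt by simp
  next
    case True
    have PI': "(\<lambda>y. \<rho> y * P y) integrable_on UNIV" using PI by blast
    have R: "(\<lambda>y. F y - \<rho> y * P y) integrable_on UNIV" by (rule integrable_diff[OF True PI'])
    have i0: "integral UNIV (\<lambda>y. \<rho> y * P y) = 0" using PI by (rule integral_unique)
    have "convolution U \<rho> x = integral UNIV F"
      unfolding convolution_def F_def ..
    also have "\<dots> = integral UNIV (\<lambda>y. F y - \<rho> y * P y)"
      unfolding integral_diff[OF True PI'] i0 by simp
    finally have cv: "convolution U \<rho> x = integral UNIV (\<lambda>y. F y - \<rho> y * P y)" .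
    have GI: "(\<lambda>y. Mt * Gf \<rho> m y) integrable_on UNIV"
      using integrable_on_cmult_left[OF G(1), of Mt] by simp
    have pw': "\<And>y. y \<in> UNIV \<Longrightarrow> norm (F y - \<rho> y * P y) \<le> Mt * Gf \<rho> m y"
      using pw by simp
    have "\<bar>convolution U \<rho> x\<bar> \<le> integral UNIV (\<lambda>y. Mt * Gf \<rho> m y)"
      using integral_norm_bound_integral[OF R GI pw'] cv by simp
    also have "\<dots> = Mt * integral UNIV (Gf \<rho> m)" by (rule integral_mult_right)
    finally show ?thesis .
  qed
qed

theorem theorem1:
  fixes \<rho> :: "real^'n::finite \<Rightarrow> real" and m :: nat
  assumes smooth: "smooth_on UNIV \<rho>"
    and compact_supp: "compact (supp \<rho>)"
    and moments: "\<And>\<alpha>. size \<alpha> \<le> m \<Longrightarrow> integral UNIV (\<lambda>x. \<rho> x * monomial \<alpha> x) = 0"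
  shows "\<exists>c>0. \<forall>(U :: real^'n \<Rightarrow> real) (L :: (real^'n \<Rightarrow> real) \<Rightarrow> (real^'n \<Rightarrow> real))
                 (\<Omega> :: (real^'n) set) (\<phi>t :: real^'n \<Rightarrow> real) (S :: (real^'n) set)
                 (M :: 'n multiset \<Rightarrow> real).
      (\<forall>r. U absolutely_integrable_on cball 0 r)
      \<and> open S \<and> C_k_on (Suc m) S U
      \<and> (\<forall>x\<in>frontier \<Omega>. \<forall>y\<in>supp \<rho>. \<forall>s\<in>{0..1}. x - s *\<^sub>R y \<in> S)
      \<and> linear_op L \<and> even_order_op L
      \<and> (\<forall>x. L (convolution U \<rho>) x = \<rho> x)
      \<and> open \<Omega> \<and> connected \<Omega> \<and> bounded \<Omega> \<and> \<Omega> \<noteq> {} \<and> supp \<rho> \<subseteq> \<Omega>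
      \<and> (\<forall>x\<in>\<Omega>. L \<phi>t x = \<rho> x) \<and> (\<forall>x\<in>frontier \<Omega>. \<phi>t x = 0)
      \<and> (\<forall>w B. (\<forall>x\<in>\<Omega>. L w x = 0) \<longrightarrow> (\<forall>x\<in>frontier \<Omega>. \<bar>w x\<bar> \<le> B)
              \<longrightarrow> (\<forall>x\<in>\<Omega>. \<bar>w x\<bar> \<le> B))
      \<and> (\<forall>\<beta>. size \<beta> = Suc m \<longrightarrow> 0 \<le> M \<beta> \<and>
            (\<forall>x\<in>frontier \<Omega>. \<forall>y\<in>supp \<rho>. \<forall>s\<in>{0..1}.
               \<bar>multi_partial \<beta> U (x - s *\<^sub>R y)\<bar> \<le> M \<beta>))
      \<longrightarrow> (\<forall>x\<in>\<Omega>. \<bar>convolution U \<rho> x - \<phi>t x\<bar>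
              \<le> c * (\<Sum>\<beta>\<in>{\<beta>::'n multiset. size \<beta> = Suc m}. M \<beta>))"
proof -
  have "C_k_on 0 UNIV \<rho>" using smooth unfolding smooth_on_def by blast
  then have "\<forall>xs. length xs \<le> 0 \<longrightarrow> continuous_on UNIV (partial_list xs \<rho>)"
    unfolding C_k_on_def by blast
  then have rc: "continuous_on UNIV \<rho>" using spec[of _ "[]"] by simp
  note G = Gf_int[OF rc compact_supp, of m]
  define c where "c = integral UNIV (Gf \<rho> m) + 1"
  have c0: "c > 0" using G(3) by (simp add: c_def)
  have finB: "finite {\<beta>::'n multiset. size \<beta> = Suc m}"
  proof (rule finite_subset[OF _ finite_imageI[OF finite_len]])
    show "{\<beta>::'n multiset. size \<beta> = Suc m} \<subseteq> mset ` {xs. length xs = Suc m}"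
    proof
      fix \<beta> :: "'n multiset" assume "\<beta> \<in> {\<beta>. size \<beta> = Suc m}"
      moreover obtain xs where "mset xs = \<beta>" using ex_mset by blast
      ultimately show "\<beta> \<in> mset ` {xs. length xs = Suc m}" by auto
    qed
  qed
  show ?thesis
  proof (intro exI[of _ c] conjI allI impI)
    show "c > 0" by (rule c0)
  next
    fix U :: "real^'n \<Rightarrow> real" and L :: "(real^'n \<Rightarrow> real) \<Rightarrow> (real^'n \<Rightarrow> real)"
      and \<Omega> :: "(real^'n) set" and \<phi>t :: "real^'n \<Rightarrow> real" and S :: "(real^'n) set"
      and M :: "'n multiset \<Rightarrow> real"
    assume H: "(\<forall>r. U absolutely_integrable_on cball 0 r)
      \<and> open S \<and> C_k_on (Suc m) S U
      \<and> (\<forall>x\<in>frontier \<Omega>. \<forall>y\<in>supp \<rho>. \<forall>s\<in>{0..1}. x - s *\<^sub>R y \<in> S)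
      \<and> linear_op L \<and> even_order_op L
      \<and> (\<forall>x. L (convolution U \<rho>) x = \<rho> x)
      \<and> open \<Omega> \<and> connected \<Omega> \<and> bounded \<Omega> \<and> \<Omega> \<noteq> {} \<and> supp \<rho> \<subseteq> \<Omega>
      \<and> (\<forall>x\<in>\<Omega>. L \<phi>t x = \<rho> x) \<and> (\<forall>x\<in>frontier \<Omega>. \<phi>t x = 0)
      \<and> (\<forall>w B. (\<forall>x\<in>\<Omega>. L w x = 0) \<longrightarrow> (\<forall>x\<in>frontier \<Omega>. \<bar>w x\<bar> \<le> B)
              \<longrightarrow> (\<forall>x\<in>\<Omega>. \<bar>w x\<bar> \<le> B))
      \<and> (\<forall>\<beta>. size \<beta> = Suc m \<longrightarrow> 0 \<le> M \<beta> \<and>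
            (\<forall>x\<in>frontier \<Omega>. \<forall>y\<in>supp \<rho>. \<forall>s\<in>{0..1}.
               \<bar>multi_partial \<beta> U (x - s *\<^sub>R y)\<bar> \<le> M \<beta>))"
    then have S: "open S" and C: "C_k_on (Suc m) S U"
      and seg: "\<forall>x\<in>frontier \<Omega>. \<forall>y\<in>supp \<rho>. \<forall>s\<in>{0..1}. x - s *\<^sub>R y \<in> S"
      and lin: "linear_op L" and Lc: "\<forall>x. L (convolution U \<rho>) x = \<rho> x"
      and Lp: "\<forall>x\<in>\<Omega>. L \<phi>t x = \<rho> x" and bd: "\<forall>x\<in>frontier \<Omega>. \<phi>t x = 0"
      and maxp: "\<forall>w B. (\<forall>x\<in>\<Omega>. L w x = 0) \<longrightarrow> (\<forall>x\<in>frontier \<Omega>. \<bar>w x\<bar> \<le> B)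
              \<longrightarrow> (\<forall>x\<in>\<Omega>. \<bar>w x\<bar> \<le> B)"
      and MH: "\<forall>\<beta>. size \<beta> = Suc m \<longrightarrow> 0 \<le> M \<beta> \<and>
            (\<forall>x\<in>frontier \<Omega>. \<forall>y\<in>supp \<rho>. \<forall>s\<in>{0..1}.
               \<bar>multi_partial \<beta> U (x - s *\<^sub>R y)\<bar> \<le> M \<beta>)"
      by blast+
    define Mt where "Mt = (\<Sum>\<beta>\<in>{\<beta>::'n multiset. size \<beta> = Suc m}. M \<beta>)"
    have Mt0: "0 \<le> Mt" unfolding Mt_def by (rule sum_nonneg) (use MH in blast)
    have Mle: "M \<beta> \<le> Mt" if "size \<beta> = Suc m" for \<beta>
      unfolding Mt_def by (rule member_le_sum) (use that MH finB in auto)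
    have fr: "\<bar>convolution U \<rho> x\<bar> \<le> c * Mt" if x: "x \<in> frontier \<Omega>" for x
    proof -
      have seg': "\<forall>y\<in>supp \<rho>. \<forall>s\<in>{0..1}. x - s *\<^sub>R y \<in> S" using seg x by blast
      have Mb: "\<bar>partial_list xs U (x - s *\<^sub>R y)\<bar> \<le> Mt"
        if xs: "length xs = Suc m" and y: "y \<in> supp \<rho>" and s: "s \<in> {0..1}" for xs y s
      proof -
        have p: "x - s *\<^sub>R y \<in> S" using seg' y s by blast
        have "partial_list xs U (x - s *\<^sub>R y) = multi_partial (mset xs) U (x - s *\<^sub>R y)"
          using multi_partial_eq[OF C S _ p, of xs] xs by simp
        also have "\<bar>\<dots>\<bar> \<le> M (mset xs)" using MH xs x y s by auto
        also have "\<dots> \<le> Mt" using Mle[of "mset xs"] xs by simp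
        finally show ?thesis .
      qed
      have "\<bar>convolution U \<rho> x\<bar> \<le> Mt * integral UNIV (Gf \<rho> m)"
        by (rule conv_bound[OF rc compact_supp moments C seg' Mb Mt0]) auto
      also have "\<dots> \<le> c * Mt" using Mt0 by (simp add: c_def algebra_simps)
      finally show ?thesis .
    qed
    define w where "w x = convolution U \<rho> x - \<phi>t x" for x
    have "L (\<lambda>x. 1 * convolution U \<rho> x + (-1) * \<phi>t x) = (\<lambda>x. 1 * L (convolution U \<rho>) x + (-1) * L \<phi>t x)"
      using lin unfolding linear_op_def by blast
    moreover have "(\<lambda>x. 1 * convolution U \<rho> x + (-1) * \<phi>t x) = w" by (simp add: w_def fun_eq_iff)
    ultimately have Lw: "L w = (\<lambda>x. L (convolution U \<rho>) x - L \<phi>t x)" by simp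
    have "\<forall>x\<in>\<Omega>. L w x = 0" using Lw Lc Lp by simp
    moreover have "\<forall>x\<in>frontier \<Omega>. \<bar>w x\<bar> \<le> c * Mt" using fr bd by (simp add: w_def)
    ultimately have "\<forall>x\<in>\<Omega>. \<bar>w x\<bar> \<le> c * Mt" using maxp by blast
    then show "\<forall>x\<in>\<Omega>. \<bar>convolution U \<rho> x - \<phi>t x\<bar> \<le> c * (\<Sum>\<beta>\<in>{\<beta>::'n multiset. size \<beta> = Suc m}. M \<beta>)"
      by (simp add: w_def Mt_def)
  qed
qed

end
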